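(* For all $n\ge k\ge3$, $$\mathbf{Sf}_{n,k}(p,1)\big|_{p^1}=\binom{k-1}{2}\binom{n-1}{k}.$$
   Context: $F_1(p,q)=q$, $F_2(p,q)=q^2$ and $F_m(p,q)=qF_{m-1}(p,q)+pF_{m-2}(p,q)$ for $m\ge3$. Let $(x)_{\downarrow_{F,p,q,0}}=1$ and $(x)_{\downarrow_{F,p,q,k}}=x(x-F_1(p,q))\cdots(x-F_{k-1}(p,q))$ for $k\ge1$. Define the polynomials $\mathbf{Sf}_{n,k}(p,q)$ for $0\le k\le n$ by $x^n=\sum_{k=0}^n\mathbf{Sf}_{n,k}(p,q)(x)_{\downarrow_{F,p,q,k}}$. $\mathbf{Sf}_{n,k}(p,1)$ is the specialization $q=1$, and $f|_{p^s}$ denotes the coefficient of $p^s$ in the polynomial $f$ in $p$. *)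

theory Defs
  imports "HOL-Computational_Algebra.Polynomial"
begin

text \<open>Elements of Z[p,q] are represented as int poly poly: the outer polynomial
variable is q, coefficients are polynomials in p over the integers.\<close>

definition pvar :: "int poly poly" where "pvar = [:[:0, 1:]:]"
definition qvar :: "int poly poly" where "qvar = [:0, 1:]"

text \<open>F m (p,q); the value at m = 0 is an unused convention.\<close>
fun Fpq :: "nat \<Rightarrow> int poly poly" where
  "Fpq 0 = 0"
| "Fpq (Suc 0) = qvar"
| "Fpq (Suc (Suc 0)) = qvar ^ 2"
| "Fpq (Suc (Suc (Suc m))) = qvar * Fpq (Suc (Suc m)) + pvar * Fpq (Suc m)"

text \<open>Generalised falling factorial as a polynomial in x over Z[p,q].\<close>
definition ffac :: "nat \<Rightarrow> int poly poly poly" where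
  "ffac k = (if k = 0 then 1 else [:0, 1:] * (\<Prod>i\<in>{1..<k}. [:- Fpq i, 1:]))"

definition Sf :: "nat \<Rightarrow> nat \<Rightarrow> int poly poly" where
  "Sf n k = (THE c :: nat \<Rightarrow> int poly poly.
       monom 1 n = (\<Sum>j\<le>n. [:c j:] * ffac j) \<and> (\<forall>j>n. c j = 0)) k"

end

theory Submission
  imports Defs
begin

fun S :: "nat \<Rightarrow> nat \<Rightarrow> int poly poly" where
  "S 0 k = (if k = 0 then 1 else 0)"
| "S (Suc n) k = (case k of 0 \<Rightarrow> 0 | Suc j \<Rightarrow> S n j) + Fpq k * S n k"

lemma S_zero: "j > n \<Longrightarrow> S n j = 0"
  by (induction n arbitrary: j) (auto split: nat.split)

lemma ffac_Suc: "ffac (Suc j) = ffac j * [:- Fpq j, 1:]"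
proof (cases j)
  case 0 then show ?thesis by (simp add: ffac_def)
next
  case (Suc m)
  then show ?thesis
    by (simp add: ffac_def prod.atLeastLessThan_Suc mult.assoc)
qed

lemma ffac_deg: "degree (ffac j) = j \<and> lead_coeff (ffac j) = 1"
proof (induction j)
  case 0 then show ?case by (simp add: ffac_def)
next
  case (Suc j)
  have nz: "ffac j \<noteq> 0" using Suc by auto
  have lz: "[:- Fpq j, 1:] \<noteq> 0" by simp
  have "degree (ffac (Suc j)) = degree (ffac j) + degree [:- Fpq j, 1:]"
    unfolding ffac_Suc by (rule degree_mult_eq[OF nz lz])
  moreover have "lead_coeff (ffac (Suc j)) = lead_coeff (ffac j) * lead_coeff [:- Fpq j, 1:]"
    unfolding ffac_Suc by (rule lead_coeff_mult)
  moreover have d: "degree (ffac j) = j" and l: "coeff (ffac j) j = 1" using Suc.IH by auto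
  ultimately show ?case by (simp add: d l)
qed

lemma x_ffac: "[:0, 1:] * ffac k = ffac (Suc k) + smult (Fpq k) (ffac k)"
  by (simp add: ffac_Suc algebra_simps)

lemma smult_const: "[:c:] * p = smult c p"
  by simp

lemma expand: "monom 1 n = (\<Sum>j\<le>n. [:S n j:] * ffac j)"
proof (induction n)
  case 0 then show ?case by (simp add: ffac_def)
next
  case (Suc n)
  have "monom 1 (Suc n) = [:0,1:] * monom (1::int poly poly) n"
    by (simp add: monom_Suc)
  also have "\<dots> = (\<Sum>j\<le>n. [:S n j:] * ([:0,1:] * ffac j))"
    by (simp add: Suc sum_distrib_left algebra_simps)
  also have "\<dots> = (\<Sum>j\<le>n. [:S n j:] * ffac (Suc j)) + (\<Sum>j\<le>n. [:Fpq j * S n j:] * ffac j)"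
    unfolding smult_const x_ffac smult_add_right smult_smult sum.distrib
    by (simp add: mult.commute)
  also have "(\<Sum>j\<le>n. [:Fpq j * S n j:] * ffac j) = (\<Sum>j\<le>Suc n. [:Fpq j * S n j:] * ffac j)"
    by (simp add: S_zero)
  also have "(\<Sum>j\<le>n. [:S n j:] * ffac (Suc j)) =
      (\<Sum>j\<le>Suc n. [:(case j of 0 \<Rightarrow> 0 | Suc i \<Rightarrow> S n i):] * ffac j)"
    by (simp add: sum.atMost_Suc_shift del: sum.atMost_Suc)
  finally show ?case
    by (simp add: sum.distrib[symmetric] algebra_simps smult_add_left)
qed

lemma indep: "(\<Sum>j\<le>n. [:e j:] * ffac j) = 0 \<Longrightarrow> j \<le> n \<Longrightarrow> e j = 0"
proof (induction n arbitrary: j)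
  case 0 then show ?case by (simp add: ffac_def)
next
  case (Suc n)
  have "coeff (\<Sum>j\<le>Suc n. [:e j:] * ffac j) (Suc n) = e (Suc n)"
  proof -
    have "coeff (\<Sum>j\<le>n. [:e j:] * ffac j) (Suc n) = 0"
      by (simp add: coeff_sum coeff_eq_0 ffac_deg)
    moreover have "coeff (ffac (Suc n)) (Suc n) = 1" using ffac_deg[of "Suc n"] by metis
    ultimately show ?thesis by (simp add: coeff_sum)
  qed
  then have e: "e (Suc n) = 0" by (metis Suc.prems(1) coeff_0)
  then have "(\<Sum>j\<le>n. [:e j:] * ffac j) = 0" using Suc.prems by simp
  then show ?case using Suc e by (cases "j = Suc n") auto
qed

lemma Sf_S: "Sf n k = S n k"
proof -
  let ?P = "\<lambda>c :: nat \<Rightarrow> int poly poly. monom 1 n = (\<Sum>j\<le>n. [:c j:] * ffac j) \<and> (\<forall>j>n. c j = 0)"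
  have "(THE c. ?P c) = S n"
  proof (rule the_equality)
    show "?P (S n)" using expand S_zero by auto
  next
    fix c assume c: "?P c"
    show "c = S n"
    proof
      fix j
      show "c j = S n j"
      proof (cases "j \<le> n")
        case True
        have "(\<Sum>j\<le>n. [:c j - S n j:] * ffac j) = 0"
          using c expand[of n] unfolding smult_const smult_diff_left sum_subtractf by simp
        from indep[OF this True] show ?thesis by simp
      next
        case False then show ?thesis using c S_zero by auto
      qed
    qed
  qed
  then show ?thesis unfolding Sf_def by simp
qed

lemma coeff_mult_1: "coeff (a * b :: int poly) 1 = coeff a 0 * coeff b 1 + coeff a 1 * coeff b 0"
  by (simp add: coeff_mult)

lemma coeff_mult_1': "coeff (a * b :: int poly) (Suc 0) = coeff a 0 * coeff b 1 + coeff a 1 * coeff b 0"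
  by (simp add: coeff_mult)

lemma G: "coeff (poly (Fpq m) 1) 0 = (if m = 0 then 0 else 1) \<and> coeff (poly (Fpq m) 1) 1 = int (m - 2)"
proof (induction m rule: Fpq.induct)
  case 1 then show ?case by simp
next
  case 2 then show ?case by (simp add: qvar_def)
next
  case 3 then show ?case by (simp add: qvar_def)
next
  case (4 m)
  have pv: "poly pvar 1 = [:0, 1:]" by (simp add: pvar_def)
  have qv: "poly qvar 1 = 1" by (simp add: qvar_def)
  have e: "poly (Fpq (Suc (Suc (Suc m)))) 1 = poly (Fpq (Suc (Suc m))) 1 + [:0,1:] * poly (Fpq (Suc m)) 1"
    by (simp add: pv qv)
  show ?case unfolding e using 4 by (simp add: coeff_mult_1)
qed

lemma T_rec: "poly (S (Suc n) k) 1 = poly (case k of 0 \<Rightarrow> 0 | Suc j \<Rightarrow> S n j) 1 + poly (Fpq k) 1 * poly (S n k) 1"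
  by simp

lemma c0: "coeff (poly (S n k) 1) 0 = (if n = 0 then (if k = 0 then 1 else 0) else if k = 0 then 0 else int ((n-1) choose (k-1)))"
proof (induction n arbitrary: k)
  case 0 then show ?case by simp
next
  case (Suc n)
  show ?case
  proof (cases k)
    case 0 then show ?thesis using G[of 0] by (simp del: S.simps add: T_rec)
  next
    case (Suc j)
    have "coeff (poly (S (Suc n) k) 1) 0 = coeff (poly (S n j) 1) 0 + coeff (poly (S n k) 1) 0"
      unfolding T_rec using G[of k] Suc by (simp del: S.simps add: coeff_mult_0)
    then show ?thesis using Suc.IH Suc
      by (cases n; cases j) (auto simp del: S.simps)
  qed
qed

lemma c1: "coeff (poly (S n k) 1) 1 = int ((k - 1) choose 2) * int ((n - 1) choose k)"
proof (induction n arbitrary: k)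
  case 0 then show ?case by simp
next
  case (Suc n)
  note IH = Suc.IH
  show ?case
  proof (cases k)
    case 0 then show ?thesis using G[of 0] by (simp del: S.simps add: T_rec)
  next
    case (Suc j)
    have "coeff (poly (S (Suc n) k) 1) 1 = coeff (poly (S n j) 1) 1 + coeff (poly (S n k) 1) 1
       + int (j - 1) * coeff (poly (S n k) 1) 0"
      unfolding T_rec using G[of k] Suc by (simp del: S.simps add: coeff_mult_1 coeff_mult_1')
    also have "\<dots> = int ((k - 1) choose 2) * int (n choose k)"
    proof (cases n)
      case 0 then show ?thesis using Suc.IH Suc c0 by (cases j) auto
    next
      case (Suc m)
      have p1: "(m choose k) + (m choose j) = (Suc m choose k)" using \<open>k = Suc j\<close> by simp
      have p2: "(j choose 2) = ((j - 1) choose 2) + (j - 1)"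
        by (cases j) (auto simp: numeral_2_eq_2)
      have "(j - 1 choose 2) * (m choose j) + (j choose 2) * (m choose k) + (j - 1) * (m choose j)
          = (j choose 2) * (Suc m choose k)"
        unfolding p1[symmetric] p2 by (simp add: algebra_simps)
      then have "int ((j - 1 choose 2) * (m choose j) + (j choose 2) * (m choose k) + (j - 1) * (m choose j))
          = int ((j choose 2) * (Suc m choose k))" by simp
      have a: "coeff (poly (S n j) 1) 1 = int ((j - 1) choose 2) * int (m choose j)"
        using IH[of j] Suc by (simp del: S.simps)
      have b: "coeff (poly (S n k) 1) 1 = int (j choose 2) * int (m choose k)"
        using IH[of k] Suc \<open>k = Suc j\<close> by (simp del: S.simps)
      have c: "coeff (poly (S n k) 1) 0 = int (m choose j)"
        using c0[of n k] Suc \<open>k = Suc j\<close> by (simp del: S.simps)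
      have p1': "int (n choose k) = int (m choose k) + int (m choose j)" using p1 Suc by simp
      have p2': "int (j choose 2) = int ((j - 1) choose 2) + int (j - 1)" using p2 by simp
      show ?thesis unfolding a b c p1' using \<open>k = Suc j\<close> p2' by (simp add: algebra_simps)
    qed
    finally show ?thesis by simp
  qed
qed

theorem theorem12:
  fixes n k :: nat
  assumes "3 \<le> k" and "k \<le> n"
  shows "coeff (poly (Sf n k) 1) 1 = int ((k - 1) choose 2) * int ((n - 1) choose k)"
  unfolding Sf_S by (rule c1)

end
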